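(* Let $\mathcal{A}$ be a finite set, $B\ge0$ an integer, $\mathfrak{F}:\mathcal{A}^{\mathbb{Z}}\to\mathcal{A}^{\mathbb{Z}}$ a cellular automaton with neighbourhood $\{-B,\dots,B\}$, and $\phi:\mathcal{A}\to\mathbb{N}$ conserved by $\mathfrak{F}$. Let $\mathbf{a}\in\mathcal{A}^{<\mathbb{Z}}$ and $\mathbf{a}'=\mathfrak{F}(\mathbf{a})$. Then: (1) for every $\mathsf{z}\in\mathbb{Z}$, $\overset{\leftrightarrow}{I}_{\mathsf{z}}(\mathbf{a})=-\big(\phi(a'_{\mathsf{z}})-\phi(a_{\mathsf{z}})\big)$; (2) for every $\mathsf{z}$, $\vec{I}_{\mathsf{z}}(\mathbf{a})$ depends only on $\mathbf{a}|_{\{\mathsf{z}-B,\dots,\mathsf{z}+B\}}$, i.e. if $\mathbf{b}\in\mathcal{A}^{<\mathbb{Z}}$ satisfies $b_{\mathsf{y}}=a_{\mathsf{y}}$ for all $\mathsf{y}\in\{\mathsf{z}-B,\dots,\mathsf{z}+B\}$ then $\vec{I}_{\mathsf{z}}(\mathbf{b})=\vec{I}_{\mathsf{z}}(\mathbf{a})$; (3) for every $\mathsf{z}$: (i) $\vec{I}_{\mathsf{z}}(\mathbf{a})\le\sum_{\mathsf{y}=\mathsf{z}-B}^{\mathsf{z}}\phi(a_{\mathsf{y}})$; (ii) $\vec{I}_{\mathsf{z}}(\mathbf{a})\le\sum_{\mathsf{y}=\mathsf{z}}^{\mathsf{z}+B}\phi(a'_{\mathsf{y}})$; (iii) $\overset{\leftharpoonup}{I}_{\mathsf{z}}(\mathbf{a})\le\sum_{\mathsf{y}=\mathsf{z}}^{\mathsf{z}+B}\phi(a_{\mathsf{y}})$;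 (iv) $\overset{\leftharpoonup}{I}_{\mathsf{z}}(\mathbf{a})\le\sum_{\mathsf{y}=\mathsf{z}-B}^{\mathsf{z}}\phi(a'_{\mathsf{y}})$.
   Context: The CA is $\mathfrak{F}(\mathbf{a})_{\mathsf{z}}=\mathfrak{f}(a_{\mathsf{z}-B},\dots,a_{\mathsf{z}+B})$. Vacuum states are $\phi^{-1}\{0\}$; $\mathcal{A}^{<\mathbb{Z}}$ is the set of configurations with only finitely many non-vacuum sites; $\phi$ is conserved by $\mathfrak{F}$ if for every $\mathbf{a}\in\mathcal{A}^{<\mathbb{Z}}$, $\mathfrak{F}(\mathbf{a})\in\mathcal{A}^{<\mathbb{Z}}$ and $\sum_{\mathsf{z}}\phi(\mathfrak{F}(\mathbf{a})_{\mathsf{z}})=\sum_{\mathsf{z}}\phi(a_{\mathsf{z}})$. Flux: for $\mathbf{a}\in\mathcal{A}^{<\mathbb{Z}}$, $\mathbf{a}'=\mathfrak{F}(\mathbf{a})$, $\vec{I}_{\mathsf{z}}(\mathbf{a})=\sum_{\mathsf{y}\le\mathsf{z}}\phi(a_{\mathsf{y}})-\sum_{\mathsf{y}\le\mathsf{z}}\phi(a'_{\mathsf{y}})$ (which by conservation also equals $\sum_{\mathsf{y}>\mathsf{z}}\phi(a'_{\mathsf{y}})-\sum_{\mathsf{y}>\mathsf{z}}\phi(a_{\mathsf{y}})$); $\overset{\leftharpoonup}{I}_{\mathsf{z}}(\mathbf{a})=-\vec{I}_{\mathsf{z}-1}(\mathbf{a})$; $\overset{\leftrightarrow}{I}_{\mathsf{z}}(\mathbf{a})=\overset{\leftharpoonup}{I}_{\mathsf{z}}(\mathbf{a})+\vec{I}_{\mathsf{z}}(\mathbf{a})$.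 *)

theory Defs
  imports Main
begin

definition CA :: "nat \<Rightarrow> ('a list \<Rightarrow> 'a) \<Rightarrow> (int \<Rightarrow> 'a) \<Rightarrow> (int \<Rightarrow> 'a)" where
  "CA B f a = (\<lambda>z. f (map (\<lambda>i. a (z + i)) [- int B .. int B]))"

text \<open>Configurations with finitely many non-vacuum sites (vacuum = phi-value 0).\<close>
definition fin_conf :: "('a \<Rightarrow> nat) \<Rightarrow> (int \<Rightarrow> 'a) \<Rightarrow> bool" where
  "fin_conf phi a \<longleftrightarrow> finite {z. phi (a z) \<noteq> 0}"

definition total :: "('a \<Rightarrow> nat) \<Rightarrow> (int \<Rightarrow> 'a) \<Rightarrow> nat" where
  "total phi a = (\<Sum>y \<in> {y. phi (a y) \<noteq> 0}. phi (a y))"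

definition psum_le :: "('a \<Rightarrow> nat) \<Rightarrow> (int \<Rightarrow> 'a) \<Rightarrow> int \<Rightarrow> nat" where
  "psum_le phi a z = (\<Sum>y \<in> {y. y \<le> z \<and> phi (a y) \<noteq> 0}. phi (a y))"

definition conserved :: "nat \<Rightarrow> ('a list \<Rightarrow> 'a) \<Rightarrow> ('a \<Rightarrow> nat) \<Rightarrow> bool" where
  "conserved B f phi \<longleftrightarrow>
     (\<forall>a. fin_conf phi a \<longrightarrow> fin_conf phi (CA B f a) \<and> total phi (CA B f a) = total phi a)"

definition flux_r :: "nat \<Rightarrow> ('a list \<Rightarrow> 'a) \<Rightarrow> ('a \<Rightarrow> nat) \<Rightarrow> (int \<Rightarrow> 'a) \<Rightarrow> int \<Rightarrow> int" where
  "flux_r B f phi a z = int (psum_le phi a z) - int (psum_le phi (CA B f a) z)"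

definition flux_l :: "nat \<Rightarrow> ('a list \<Rightarrow> 'a) \<Rightarrow> ('a \<Rightarrow> nat) \<Rightarrow> (int \<Rightarrow> 'a) \<Rightarrow> int \<Rightarrow> int" where
  "flux_l B f phi a z = - flux_r B f phi a (z - 1)"

definition flux_lr :: "nat \<Rightarrow> ('a list \<Rightarrow> 'a) \<Rightarrow> ('a \<Rightarrow> nat) \<Rightarrow> (int \<Rightarrow> 'a) \<Rightarrow> int \<Rightarrow> int" where
  "flux_lr B f phi a z = flux_l B f phi a z + flux_r B f phi a z"

end

theory Submission
  imports Defs
begin

definition SS :: "('a \<Rightarrow> nat) \<Rightarrow> (int \<Rightarrow> 'a) \<Rightarrow> (int \<Rightarrow> bool) \<Rightarrow> nat" where
  "SS phi a P = (\<Sum>y \<in> {y. P y \<and> phi (a y) \<noteq> 0}. phi (a y))"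

lemma psum_le_SS: "psum_le phi a z = SS phi a (\<lambda>y. y \<le> z)"
  by (simp add: psum_le_def SS_def)

lemma total_SS: "total phi a = SS phi a (\<lambda>y. True)"
  by (simp add: total_def SS_def)

lemma SS_split:
  assumes "fin_conf phi a"
  shows "SS phi a P = SS phi a (\<lambda>y. P y \<and> Q y) + SS phi a (\<lambda>y. P y \<and> \<not> Q y)"
proof -
  have fin: "finite {y. phi (a y) \<noteq> 0}" using assms by (simp add: fin_conf_def)
  have "{y. P y \<and> phi (a y) \<noteq> 0} = {y. (P y \<and> Q y) \<and> phi (a y) \<noteq> 0} \<union> {y. (P y \<and> \<not> Q y) \<and> phi (a y) \<noteq> 0}"
    by auto
  moreover have "finite {y. (P y \<and> Q y) \<and> phi (a y) \<noteq> 0}" "finite {y. (P y \<and> \<not> Q y) \<and> phi (a y) \<noteq> 0}"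
    by (rule finite_subset[OF _ fin], auto)+
  ultimately show ?thesis unfolding SS_def
    by (subst sum.union_disjoint[symmetric]) auto
qed

lemma SS_interval:
  assumes "finite {y. P y}"
  shows "SS phi a P = (\<Sum>y \<in> {y. P y}. phi (a y))"
  unfolding SS_def
  by (rule sum.mono_neutral_left) (use assms in auto)

lemma SS_cong:
  assumes "\<And>y. P y \<Longrightarrow> a y = b y"
  shows "SS phi a P = SS phi b P"
proof -
  have "{y. P y \<and> phi (a y) \<noteq> 0} = {y. P y \<and> phi (b y) \<noteq> 0}" using assms by auto
  then show ?thesis unfolding SS_def
    by (intro sum.cong) (auto simp: assms)
qed

lemma SS_mono:
  assumes "fin_conf phi a" "\<And>y. P y \<Longrightarrow> Q y"
  shows "SS phi a P \<le> SS phi a Q"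
proof -
  have fin: "finite {y. phi (a y) \<noteq> 0}" using assms by (simp add: fin_conf_def)
  show ?thesis unfolding SS_def
    by (rule sum_mono2) (use assms fin in \<open>auto intro: finite_subset[OF _ fin]\<close>)
qed

lemma SS_false: "SS phi a (\<lambda>y. P y) = 0" if "\<And>y. P y \<Longrightarrow> phi (a y) = 0"
  unfolding SS_def using that by auto

lemma CA_local:
  assumes "\<And>i. y - int B \<le> i \<Longrightarrow> i \<le> y + int B \<Longrightarrow> a i = b i"
  shows "CA B f a y = CA B f b y"
  unfolding CA_def using assms by (auto intro!: arg_cong[where f=f] map_cong)

lemma vac_exists:
  assumes "fin_conf phi a" shows "\<exists>v. phi v = 0"
proof -
  have "finite {z. phi (a z) \<noteq> 0}" using assms by (simp add: fin_conf_def)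
  then have "{z. phi (a z) \<noteq> 0} \<noteq> UNIV" using infinite_UNIV_int by auto
  then show ?thesis by auto
qed

lemma fin_patch:
  assumes "fin_conf phi a" "fin_conf phi b"
  shows "fin_conf phi (\<lambda>y. if P y then a y else b y)"
proof -
  have "{y. phi (if P y then a y else b y) \<noteq> 0} \<subseteq> {y. phi (a y) \<noteq> 0} \<union> {y. phi (b y) \<noteq> 0}" by auto
  then show ?thesis using assms unfolding fin_conf_def by (meson finite_Un finite_subset)
qed

lemma fin_patch_vac:
  assumes "fin_conf phi a" "phi v = 0"
  shows "fin_conf phi (\<lambda>y. if P y then a y else v)"
proof -
  have "{y. phi (if P y then a y else v) \<noteq> 0} \<subseteq> {y. phi (a y) \<noteq> 0}" using assms(2) by auto
  then show ?thesis using assms unfolding fin_conf_def by (meson finite_subset)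
qed

lemma flux_right:
  assumes cons: "conserved B f phi" and fa: "fin_conf phi a"
  shows "flux_r B f phi a z = int (SS phi (CA B f a) (\<lambda>y. \<not> y \<le> z)) - int (SS phi a (\<lambda>y. \<not> y \<le> z))"
proof -
  have fa': "fin_conf phi (CA B f a)" and tt: "total phi (CA B f a) = total phi a"
    using cons fa by (auto simp: conserved_def)
  have "total phi a = SS phi a (\<lambda>y. y \<le> z) + SS phi a (\<lambda>y. \<not> y \<le> z)"
    using SS_split[OF fa, of "\<lambda>y. True" "\<lambda>y. y \<le> z"] by (simp add: total_SS)
  moreover have "total phi (CA B f a) = SS phi (CA B f a) (\<lambda>y. y \<le> z) + SS phi (CA B f a) (\<lambda>y. \<not> y \<le> z)"
    using SS_split[OF fa', of "\<lambda>y. True" "\<lambda>y. y \<le> z"] by (simp add: total_SS)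
  ultimately show ?thesis using tt unfolding flux_r_def psum_le_SS by linarith
qed


lemma SS_le_split:
  assumes "fin_conf phi a" "w \<le> z"
  shows "SS phi a (\<lambda>y. y \<le> z) = SS phi a (\<lambda>y. y \<le> w) + (\<Sum>y \<in> {w<..z}. phi (a y))"
proof -
  have "SS phi a (\<lambda>y. y \<le> z) = SS phi a (\<lambda>y. y \<le> z \<and> y \<le> w) + SS phi a (\<lambda>y. y \<le> z \<and> \<not> y \<le> w)"
    by (rule SS_split[OF assms(1)])
  moreover have "(\<lambda>y::int. y \<le> z \<and> y \<le> w) = (\<lambda>y. y \<le> w)" using assms(2) by auto
  moreover have "SS phi a (\<lambda>y. y \<le> z \<and> \<not> y \<le> w) = (\<Sum>y \<in> {y. y \<le> z \<and> \<not> y \<le> w}. phi (a y))"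
    by (rule SS_interval) (rule finite_subset[of _ "{w<..z}"], auto)
  moreover have "{y. y \<le> z \<and> \<not> y \<le> w} = {w<..z}" by auto
  ultimately show ?thesis by simp
qed

lemma SS_gt_split:
  assumes "fin_conf phi a" "z \<le> w"
  shows "SS phi a (\<lambda>y. \<not> y \<le> z) = (\<Sum>y \<in> {z<..w}. phi (a y)) + SS phi a (\<lambda>y. \<not> y \<le> w)"
proof -
  have "SS phi a (\<lambda>y. \<not> y \<le> z) = SS phi a (\<lambda>y. \<not> y \<le> z \<and> y \<le> w) + SS phi a (\<lambda>y. \<not> y \<le> z \<and> \<not> y \<le> w)"
    by (rule SS_split[OF assms(1)])
  moreover have "(\<lambda>y::int. \<not> y \<le> z \<and> \<not> y \<le> w) = (\<lambda>y. \<not> y \<le> w)" using assms(2) by auto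
  moreover have "SS phi a (\<lambda>y. \<not> y \<le> z \<and> y \<le> w) = (\<Sum>y \<in> {y. \<not> y \<le> z \<and> y \<le> w}. phi (a y))"
    by (rule SS_interval) (rule finite_subset[of _ "{z<..w}"], auto)
  moreover have "{y. \<not> y \<le> z \<and> y \<le> w} = {z<..w}" by auto
  ultimately show ?thesis by simp
qed

lemma total_split:
  assumes "fin_conf phi a"
  shows "total phi a = SS phi a (\<lambda>y. y \<le> z) + SS phi a (\<lambda>y. \<not> y \<le> z)"
  using SS_split[OF assms, of "\<lambda>y. True" "\<lambda>y. y \<le> z"] by (simp add: total_SS)

lemma sum_shift_le:
  "(\<Sum>y \<in> {z<..z + int B}. g y) \<le> (\<Sum>y \<in> {z..z + int B}. (g y::nat))"
  by (rule sum_mono2) auto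

lemma sum_shift_le2:
  "(\<Sum>y \<in> {z - int B - 1<..z - 1}. g y) \<le> (\<Sum>y \<in> {z - int B..z}. (g y::nat))"
  by (rule sum_mono2) auto

theorem proposition12:
  fixes B :: nat and f :: "'a::finite list \<Rightarrow> 'a" and phi :: "'a \<Rightarrow> nat"
    and a :: "int \<Rightarrow> 'a"
  assumes cons: "conserved B f phi"
    and fa: "fin_conf phi a"
  defines "a' \<equiv> CA B f a"
  shows "(\<forall>z. flux_lr B f phi a z = - (int (phi (a' z)) - int (phi (a z))))
    \<and> (\<forall>z b. fin_conf phi b \<longrightarrow> (\<forall>y \<in> {z - int B .. z + int B}. b y = a y)
          \<longrightarrow> flux_r B f phi b z = flux_r B f phi a z)
    \<and> (\<forall>z. flux_r B f phi a z \<le> int (\<Sum>y \<in> {z - int B .. z}. phi (a y))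
         \<and> flux_r B f phi a z \<le> int (\<Sum>y \<in> {z .. z + int B}. phi (a' y))
         \<and> flux_l B f phi a z \<le> int (\<Sum>y \<in> {z .. z + int B}. phi (a y))
         \<and> flux_l B f phi a z \<le> int (\<Sum>y \<in> {z - int B .. z}. phi (a' y)))"
proof -
  have CF: "\<And>c. fin_conf phi c \<Longrightarrow> fin_conf phi (CA B f c) \<and> total phi (CA B f c) = total phi c"
    using cons by (auto simp: conserved_def)
  have fa': "fin_conf phi a'" using CF[OF fa] by (simp add: a'_def)
  obtain v where v: "phi v = 0" using vac_exists[OF fa] by blast
  have P1: "flux_lr B f phi a z = - (int (phi (a' z)) - int (phi (a z)))" for z
  proof -
    have zz: "{z - 1<..z} = {z}" by auto
    have s1: "SS phi a (\<lambda>y. y \<le> z) = SS phi a (\<lambda>y. y \<le> z - 1) + phi (a z)"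
      using SS_le_split[OF fa, of "z-1" z] zz by simp
    have s2: "SS phi a' (\<lambda>y. y \<le> z) = SS phi a' (\<lambda>y. y \<le> z - 1) + phi (a' z)"
      using SS_le_split[OF fa', of "z-1" z] zz by simp
    show ?thesis using s1 s2 unfolding flux_lr_def flux_l_def flux_r_def psum_le_SS a'_def[symmetric]
      by simp
  qed
  have P2: "flux_r B f phi b z = flux_r B f phi a z"
    if fb: "fin_conf phi b" and ag: "\<forall>y \<in> {z - int B .. z + int B}. b y = a y" for z b
  proof -
    define c where "c = (\<lambda>y. if y \<le> z + int B then a y else b y)"
    have fc: "fin_conf phi c" unfolding c_def by (rule fin_patch[OF fa fb])
    have ca: "CA B f c y = a' y" if "y \<le> z" for y
      unfolding a'_def by (rule CA_local) (use that in \<open>auto simp: c_def\<close>)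
    have cb: "CA B f c y = CA B f b y" if "\<not> y \<le> z" for y
      by (rule CA_local) (use that ag in \<open>auto simp: c_def\<close>)
    have "flux_r B f phi a z = flux_r B f phi c z"
      unfolding flux_r_def psum_le_SS a'_def[symmetric]
      using SS_cong[of "\<lambda>y. y \<le> z" c a phi] SS_cong[of "\<lambda>y. y \<le> z" "CA B f c" a' phi] ca
      by (auto simp: c_def)
    moreover have cbb: "c y = b y" if "\<not> y \<le> z" for y
      using that ag by (auto simp: c_def)
    moreover have "flux_r B f phi c z = flux_r B f phi b z"
      unfolding flux_right[OF cons fc] flux_right[OF cons fb]
      using SS_cong[of "\<lambda>y. \<not> y \<le> z" c b phi] SS_cong[of "\<lambda>y. \<not> y \<le> z" "CA B f c" "CA B f b" phi] cb cbb
      by auto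
    ultimately show ?thesis by simp
  qed
  have P3i: "flux_r B f phi a z \<le> int (\<Sum>y \<in> {z - int B .. z}. phi (a y))" for z
  proof -
    define c where "c = (\<lambda>y. if z - int B \<le> y then a y else v)"
    have fc: "fin_conf phi c" unfolding c_def by (rule fin_patch_vac[OF fa v])
    have ca: "CA B f c y = a' y" if "\<not> y \<le> z" for y
      unfolding a'_def by (rule CA_local) (use that in \<open>auto simp: c_def\<close>)
    have "flux_r B f phi a z = flux_r B f phi c z"
      unfolding flux_right[OF cons fc] flux_right[OF cons fa] a'_def[symmetric]
      using SS_cong[of "\<lambda>y. \<not> y \<le> z" c a phi] SS_cong[of "\<lambda>y. \<not> y \<le> z" "CA B f c" a' phi] ca
      by (auto simp: c_def)
    also have "\<dots> \<le> int (SS phi c (\<lambda>y. y \<le> z))"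
      unfolding flux_r_def psum_le_SS by simp
    also have "SS phi c (\<lambda>y. y \<le> z) = SS phi c (\<lambda>y. y \<le> z - int B - 1) + (\<Sum>y \<in> {z - int B - 1<..z}. phi (c y))"
      by (rule SS_le_split[OF fc]) simp
    also have "SS phi c (\<lambda>y. y \<le> z - int B - 1) = 0"
      by (rule SS_false) (auto simp: c_def v)
    also have "{z - int B - 1<..z} = {z - int B..z}" by auto
    also have "(\<Sum>y \<in> {z - int B..z}. phi (c y)) = (\<Sum>y \<in> {z - int B..z}. phi (a y))"
      by (rule sum.cong) (auto simp: c_def)
    finally show ?thesis by simp
  qed
  have P3ii: "flux_r B f phi a z \<le> int (\<Sum>y \<in> {z .. z + int B}. phi (a' y))" for z
  proof -
    define d where "d = (\<lambda>y. if z < y then a y else v)"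
    have fd: "fin_conf phi d" unfolding d_def by (rule fin_patch_vac[OF fa v])
    have fd': "fin_conf phi (CA B f d)" and td: "total phi (CA B f d) = total phi d" using CF[OF fd] by auto
    have da: "CA B f d y = a' y" if "\<not> y \<le> z + int B" for y
      unfolding a'_def by (rule CA_local) (use that in \<open>auto simp: d_def\<close>)
    have e1: "SS phi a' (\<lambda>y. \<not> y \<le> z) = (\<Sum>y \<in> {z<..z + int B}. phi (a' y)) + SS phi a' (\<lambda>y. \<not> y \<le> z + int B)"
      by (rule SS_gt_split[OF fa']) simp
    have "SS phi a' (\<lambda>y. \<not> y \<le> z + int B) = SS phi (CA B f d) (\<lambda>y. \<not> y \<le> z + int B)"
      by (rule SS_cong) (simp add: da)
    also have "\<dots> \<le> total phi (CA B f d)"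
      using total_split[OF fd', of "z + int B"] by simp
    also have "\<dots> = SS phi d (\<lambda>y. y \<le> z) + SS phi d (\<lambda>y. \<not> y \<le> z)"
      using td total_split[OF fd, of z] by simp
    also have "SS phi d (\<lambda>y. y \<le> z) = 0" by (rule SS_false) (auto simp: d_def v)
    also have "SS phi d (\<lambda>y. \<not> y \<le> z) = SS phi a (\<lambda>y. \<not> y \<le> z)"
      by (rule SS_cong) (auto simp: d_def)
    finally have e2: "SS phi a' (\<lambda>y. \<not> y \<le> z + int B) \<le> SS phi a (\<lambda>y. \<not> y \<le> z)" by simp
    have "flux_r B f phi a z \<le> int (\<Sum>y \<in> {z<..z + int B}. phi (a' y))"
      unfolding flux_right[OF cons fa] a'_def[symmetric] using e1 e2 by linarith
    also have "\<dots> \<le> int (\<Sum>y \<in> {z .. z + int B}. phi (a' y))"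
      using sum_shift_le[where z=z and B=B and g="\<lambda>y. phi (a' y)"] by linarith
    finally show ?thesis .
  qed
  have P3iii: "flux_l B f phi a z \<le> int (\<Sum>y \<in> {z .. z + int B}. phi (a y))" for z
  proof -
    define c where "c = (\<lambda>y. if y \<le> z + int B then a y else v)"
    have fc: "fin_conf phi c" unfolding c_def by (rule fin_patch_vac[OF fa v])
    have ca: "CA B f c y = a' y" if "y \<le> z - 1" for y
      unfolding a'_def by (rule CA_local) (use that in \<open>auto simp: c_def\<close>)
    have "flux_l B f phi a z = - flux_r B f phi c (z - 1)"
      unfolding flux_l_def flux_r_def psum_le_SS a'_def[symmetric]
      using SS_cong[of "\<lambda>y. y \<le> z - 1" c a phi] SS_cong[of "\<lambda>y. y \<le> z - 1" "CA B f c" a' phi] ca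
      by (auto simp: c_def)
    also have "\<dots> \<le> int (SS phi c (\<lambda>y. \<not> y \<le> z - 1))"
      unfolding flux_right[OF cons fc] by simp
    also have "SS phi c (\<lambda>y. \<not> y \<le> z - 1) = (\<Sum>y \<in> {z - 1<..z + int B}. phi (c y)) + SS phi c (\<lambda>y. \<not> y \<le> z + int B)"
      by (rule SS_gt_split[OF fc]) simp
    also have "SS phi c (\<lambda>y. \<not> y \<le> z + int B) = 0"
      by (rule SS_false) (auto simp: c_def v)
    also have "{z - 1<..z + int B} = {z..z + int B}" by auto
    also have "(\<Sum>y \<in> {z..z + int B}. phi (c y)) = (\<Sum>y \<in> {z..z + int B}. phi (a y))"
      by (rule sum.cong) (auto simp: c_def)
    finally show ?thesis by simp
  qed
  have P3iv: "flux_l B f phi a z \<le> int (\<Sum>y \<in> {z - int B .. z}. phi (a' y))" for z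
  proof -
    define d where "d = (\<lambda>y. if y \<le> z - 1 then a y else v)"
    have fd: "fin_conf phi d" unfolding d_def by (rule fin_patch_vac[OF fa v])
    have fd': "fin_conf phi (CA B f d)" and td: "total phi (CA B f d) = total phi d" using CF[OF fd] by auto
    have da: "CA B f d y = a' y" if "y \<le> z - int B - 1" for y
      unfolding a'_def by (rule CA_local) (use that in \<open>auto simp: d_def\<close>)
    have e1: "SS phi a' (\<lambda>y. y \<le> z - 1) = SS phi a' (\<lambda>y. y \<le> z - int B - 1) + (\<Sum>y \<in> {z - int B - 1<..z - 1}. phi (a' y))"
      by (rule SS_le_split[OF fa']) simp
    have "SS phi a' (\<lambda>y. y \<le> z - int B - 1) = SS phi (CA B f d) (\<lambda>y. y \<le> z - int B - 1)"
      by (rule SS_cong) (simp add: da)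
    also have "\<dots> \<le> total phi (CA B f d)"
      using total_split[OF fd', of "z - int B - 1"] by simp
    also have "\<dots> = SS phi d (\<lambda>y. y \<le> z - 1) + SS phi d (\<lambda>y. \<not> y \<le> z - 1)"
      using td total_split[OF fd, of "z - 1"] by simp
    also have "SS phi d (\<lambda>y. \<not> y \<le> z - 1) = 0" by (rule SS_false) (auto simp: d_def v)
    also have "SS phi d (\<lambda>y. y \<le> z - 1) = SS phi a (\<lambda>y. y \<le> z - 1)"
      by (rule SS_cong) (auto simp: d_def)
    finally have e2: "SS phi a' (\<lambda>y. y \<le> z - int B - 1) \<le> SS phi a (\<lambda>y. y \<le> z - 1)" by simp
    have "flux_l B f phi a z \<le> int (\<Sum>y \<in> {z - int B - 1<..z - 1}. phi (a' y))"
      unfolding flux_l_def flux_r_def psum_le_SS a'_def[symmetric] using e1 e2 by linarith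
    also have "\<dots> \<le> int (\<Sum>y \<in> {z - int B .. z}. phi (a' y))"
      using sum_shift_le2[where z=z and B=B and g="\<lambda>y. phi (a' y)"] by linarith
    finally show ?thesis .
  qed
  show ?thesis using P1 P2 P3i P3ii P3iii P3iv by blast
qed

end
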